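(* Let $S \subset \mathbb{R}^2$ be compact such that both $S$ and $S^\mathsf{c}$ satisfy the $r$-rolling condition, and let $\mathcal{X}_n=\{X_1,\ldots,X_n\}$ be independent and uniformly distributed on $S$. For any $\alpha\in (0,r)$, there is a constant $A > 0$ depending only on $(\alpha,r,\operatorname{diam}(S))$ such that, for every $n\ge1$, with probability at least $1-Ae^{-n/A}$ the following holds: for every connected component $\Gamma_k$ of $\partial S$, there is an $\alpha$-edge of $\mathcal{X}_n$ with an endpoint within distance $\alpha$ of $\Gamma_k$.
   Context: A set $T\subset\mathbb{R}^2$ satisfies the $r$-rolling condition ($r>0$) if for every $x \in \partial T$ there is an open ball $B$ of radius $r$ with $B \cap T = \emptyset$ and $x \in \partial B$. $S^\mathsf{c}=\mathbb{R}^2\setminus S$, $\operatorname{diam}(S)=\sup\{\|x-y\|:x,y\in S\}$. A pair of distinct sample points $(X_i,X_j)$ forms an $\alpha$-edge if there is an open ball $B$ of radius $\alpha$ with $X_i,X_j\in\partial B$ and $B\cap\mathcal{X}_n=\emptyset$. *)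

theory Defs
  imports "HOL-Probability.Probability"
begin

type_synonym point = "real ^ 2"

definition rolling :: "point set \<Rightarrow> real \<Rightarrow> bool" where
  "rolling T r \<longleftrightarrow>
     (\<forall>x\<in>frontier T. \<exists>c. ball c r \<inter> T = {} \<and> x \<in> sphere c r)"

definition alpha_edge :: "real \<Rightarrow> point set \<Rightarrow> point \<Rightarrow> point \<Rightarrow> bool" where
  "alpha_edge \<alpha> P p q \<longleftrightarrow> p \<in> P \<and> q \<in> P \<and> p \<noteq> q \<and>
     (\<exists>c. p \<in> sphere c \<alpha> \<and> q \<in> sphere c \<alpha> \<and> ball c \<alpha> \<inter> P = {})"

definition sample_space :: "point set \<Rightarrow> nat \<Rightarrow> (nat \<Rightarrow> point) measure" where
  "sample_space S n = PiM {..<n} (\<lambda>_. uniform_measure lborel S)"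

end

theory Submission
  imports Defs
begin


lemma infdist_attain_fin:
  fixes P :: "'a::heine_borel set"
  assumes "finite P" "P \<noteq> {}"
  obtains p where "p \<in> P" "infdist x P = dist x p"
  using infdist_attains_inf[of P x] assms finite_imp_closed by blast

lemma edge_exists:
  fixes P :: "point set" and x c u :: point and \<alpha> r s m :: real
  assumes a0: "0 < \<alpha>" and ar: "\<alpha> < r" and fin: "finite P"
    and far: "\<forall>q\<in>P. r \<le> dist q c"
    and u_def: "u = (1/r) *\<^sub>R (c - x)" and xc: "dist x c = r"
    and s_def: "s = \<alpha>^2 / r" and m_def: "m = (\<alpha> - s) / 2"
    and z1: "z1 \<in> P" "dist z1 (x - (m/2) *\<^sub>R u) < m/2"
    and z2: "z2 \<in> P" "dist z2 (x - (3*m/2) *\<^sub>R u) < m/2"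
  shows "\<exists>p q. alpha_edge \<alpha> P p q \<and> dist p x \<le> \<alpha>"
proof -
  have r0: "0 < r" using a0 ar by linarith
  have nu: "norm u = 1" using xc r0 by (simp add: u_def dist_norm norm_minus_commute)
  have uu: "u \<bullet> u = 1" using nu by (simp add: dot_square_norm)
  have cx: "c = x + r *\<^sub>R u" using r0 by (simp add: u_def)
  have s0: "0 < s" using a0 r0 by (simp add: s_def)
  have sa: "s < \<alpha>" using a0 ar r0 by (simp add: s_def power2_eq_square field_simps)
  have m0: "0 < m" using sa by (simp add: m_def)
  have sm: "s + m < \<alpha>" using sa unfolding m_def by (simp add: field_simps)
  have Pne: "P \<noteq> {}" using z1 by auto
  define w where "w t = x + t *\<^sub>R u" for t
  define h where "h t = infdist (w t) P" for t
  have hcont: "continuous_on {s..\<alpha>} h"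
    unfolding h_def w_def by (intro continuous_intros)
  have "\<alpha> \<le> h \<alpha>"
  proof -
    obtain q where q: "q \<in> P" "h \<alpha> = dist (w \<alpha>) q"
      using infdist_attain_fin[OF fin Pne] unfolding h_def by metis
    have "dist (w \<alpha>) c = r - \<alpha>"
      using nu ar by (simp add: w_def cx dist_norm algebra_simps flip: scaleR_diff_left)
    moreover have "dist q c \<le> dist q (w \<alpha>) + dist (w \<alpha>) c" by (rule dist_triangle)
    moreover have "r \<le> dist q c" using far q(1) by blast
    ultimately show ?thesis using q(2) by (simp add: dist_commute)
  qed
  moreover have "h s < \<alpha>"
  proof -
    have "dist (w s) (x - (m/2) *\<^sub>R u) = s + m/2"
      using nu s0 m0 by (simp add: w_def dist_norm algebra_simps flip: scaleR_add_left)
    hence "dist (w s) z1 < s + m"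
      using dist_triangle[of "w s" z1 "x - (m/2) *\<^sub>R u"] z1 by (simp add: dist_commute)
    thus ?thesis unfolding h_def using infdist_le[OF z1(1), of "w s"] sm by linarith
  qed
  ultimately obtain t where t: "s \<le> t" "t \<le> \<alpha>" "h t = \<alpha>"
    using IVT'[of h s \<alpha> \<alpha>] hcont sa by force
  obtain p where p: "p \<in> P" "infdist (w t) P = dist (w t) p"
    using infdist_attain_fin[OF fin Pne] by metis
  have wp: "dist (w t) p = \<alpha>" using p t by (simp add: h_def)
  have wall: "\<forall>q\<in>P. \<alpha> \<le> dist (w t) q"
    using infdist_le wp p by (metis)
  have px: "dist p x \<le> \<alpha>"
  proof -
    define v where "v = p - x"
    have d1: "dist p c = norm (v - r *\<^sub>R u)" by (simp add: v_def cx dist_norm algebra_simps)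
    have d2: "dist (w t) p = norm (v - t *\<^sub>R u)" by (simp add: v_def w_def dist_norm algebra_simps norm_minus_commute)
    have e1: "(dist p c)^2 = (v \<bullet> v) - 2*r*(v \<bullet> u) + r^2"
      unfolding d1 power2_norm_eq_inner by (simp add: inner_diff_left inner_diff_right uu inner_commute power2_eq_square)
    have e2: "(dist (w t) p)^2 = (v \<bullet> v) - 2*t*(v \<bullet> u) + t^2"
      unfolding d2 power2_norm_eq_inner by (simp add: inner_diff_left inner_diff_right uu inner_commute power2_eq_square)
    have "r^2 \<le> (dist p c)^2" using far p r0 by (simp add: power_mono)
    hence i1: "2*r*(v \<bullet> u) \<le> v \<bullet> v" using e1 by simp
    have i2: "\<alpha>^2 = (v \<bullet> v) - 2*t*(v \<bullet> u) + t^2" using e2 wp by simp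
    have t0: "0 < t" using s0 t by linarith
    have "r * t \<ge> \<alpha>^2" using t(1) r0 by (simp add: s_def field_simps)
    have vv: "v \<bullet> v \<le> \<alpha>^2"
    proof (rule ccontr)
      assume "\<not> ?thesis"
      hence "v \<bullet> v > \<alpha>^2" by simp
      have "2*t*(v \<bullet> u) \<le> t*(v \<bullet> v)/r" using i1 t0 r0
        by (simp add: field_simps)
      hence k1: "r*(2*t*(v \<bullet> u)) \<le> t*(v \<bullet> v)" using r0 by (simp add: field_simps)
      from i2 have eq: "(v \<bullet> v) + t^2 = \<alpha>^2 + 2*t*(v \<bullet> u)" by simp
      have "r*((v \<bullet> v) + t^2) = r*(\<alpha>^2 + 2*t*(v \<bullet> u))" using eq by simp
      hence "r*(v \<bullet> v) + r*t^2 = r*\<alpha>^2 + r*(2*t*(v \<bullet> u))" by (simp add: algebra_simps)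
      hence "\<alpha>^2 * r \<ge> (v \<bullet> v)*(r - t) + t^2 * r" using k1 by (simp add: algebra_simps)
      moreover have "(v \<bullet> v)*(r - t) > \<alpha>^2 * (r - t)" using \<open>v \<bullet> v > \<alpha>^2\<close> t ar
        by (intro mult_strict_right_mono) auto
      ultimately have "t^2 * r < \<alpha>^2 * t" by (simp add: algebra_simps)
      hence "t * r < \<alpha>^2" using t0 by (simp add: power2_eq_square)
      thus False using \<open>r * t \<ge> \<alpha>^2\<close> by (simp add: mult.commute)
    qed
    have "(dist p x)^2 \<le> \<alpha>^2" using vv by (simp add: v_def dist_norm power2_norm_eq_inner)
    thus ?thesis using a0 by (simp add: abs_le_square_iff[symmetric] power2_le_iff_abs_le)
  qed
  have d1: "dist z1 x < m"
  proof -
    have "dist (x - (m/2) *\<^sub>R u) x = m/2" using nu m0 by (simp add: dist_norm)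
    thus ?thesis using dist_triangle[of z1 x "x - (m/2) *\<^sub>R u"] z1 by linarith
  qed
  have d2: "dist z2 x < 2*m"
  proof -
    have "dist (x - (3*m/2) *\<^sub>R u) x = 3*m/2" using nu m0 by (simp add: dist_norm)
    thus ?thesis using dist_triangle[of z2 x "x - (3*m/2) *\<^sub>R u"] z2 by linarith
  qed
  have z12: "z1 \<noteq> z2"
  proof
    assume "z1 = z2"
    have "dist (x - (m/2) *\<^sub>R u) (x - (3*m/2) *\<^sub>R u) = m"
      using nu m0 by (simp add: dist_norm algebra_simps flip: scaleR_diff_left)
    moreover have "dist (x - (m/2) *\<^sub>R u) (x - (3*m/2) *\<^sub>R u) \<le> dist (x - (m/2) *\<^sub>R u) z1 + dist z1 (x - (3*m/2) *\<^sub>R u)"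
      by (rule dist_triangle)
    ultimately show False using z1 z2 \<open>z1 = z2\<close> by (simp add: dist_commute)
  qed
  have m2: "2*m < \<alpha>" using s0 sa unfolding m_def by (simp add: field_simps)
  obtain q0 where q0: "q0 \<in> P" "q0 \<noteq> p" "dist q0 p < 2*\<alpha>"
  proof (cases "z1 = p")
    case True
    then show ?thesis using that[of z2] z12 z2 d2 px dist_triangle[of z2 p x] m2 m0
      by (simp add: dist_commute)
  next
    case False
    then show ?thesis using that[of z1] z1 d1 px dist_triangle[of z1 p x] m2 m0
      by (simp add: dist_commute)
  qed
  define Q where "Q = P - {p}"
  have Qfin: "finite Q" and Qne: "Q \<noteq> {}" using fin q0 by (auto simp: Q_def)
  define g where "g y = infdist y Q" for y
  have gcont: "continuous_on (sphere p \<alpha>) g" unfolding g_def by (intro continuous_intros)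
  have conn: "connected (g ` sphere p \<alpha>)"
    by (intro connected_continuous_image gcont connected_sphere) simp
  have wt_s: "w t \<in> sphere p \<alpha>" using wp by (simp add: dist_commute)
  have g1: "\<alpha> \<le> g (w t)"
    using infdist_mono[of Q P "w t"] Qne p wp by (auto simp: g_def Q_def)
  define \<delta> where "\<delta> = dist q0 p"
  have \<delta>0: "0 < \<delta>" using q0 by (simp add: \<delta>_def)
  define w2 where "w2 = p + (\<alpha> / \<delta>) *\<^sub>R (q0 - p)"
  have w2s: "w2 \<in> sphere p \<alpha>"
    using \<delta>0 a0 by (simp add: w2_def \<delta>_def dist_norm)
  have "dist w2 q0 = \<bar>\<delta> - \<alpha>\<bar>"
  proof -
    have "q0 - w2 = (1 - \<alpha>/\<delta>) *\<^sub>R (q0 - p)" by (simp add: w2_def algebra_simps)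
    hence "dist w2 q0 = \<bar>1 - \<alpha>/\<delta>\<bar> * \<delta>" by (simp add: dist_norm norm_minus_commute \<delta>_def)
    also have "\<dots> = \<bar>\<delta> - \<alpha>\<bar>" using \<delta>0
      by (metis abs_of_pos diff_divide_distrib divide_self_if abs_divide less_irrefl nonzero_mult_div_cancel_right times_divide_eq_left)
    finally show ?thesis .
  qed
  hence "dist w2 q0 < \<alpha>" using q0 a0 \<delta>0 by (simp add: \<delta>_def abs_less_iff)
  hence g2: "g w2 < \<alpha>" using infdist_le[of q0 Q w2] q0 by (simp add: g_def Q_def)
  have "\<alpha> \<in> g ` sphere p \<alpha>"
    using conn g1 g2 w2s wt_s unfolding connected_iff_interval
    by (meson imageI less_imp_le)
  then obtain w3 where w3: "w3 \<in> sphere p \<alpha>" "g w3 = \<alpha>" by auto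
  obtain q where q: "q \<in> Q" "infdist w3 Q = dist w3 q"
    using infdist_attain_fin[OF Qfin Qne] by metis
  have "alpha_edge \<alpha> P p q"
    unfolding alpha_edge_def
  proof (intro conjI exI[of _ w3])
    show "p \<in> P" using p by simp
    show "q \<in> P" "p \<noteq> q" using q by (auto simp: Q_def)
    show "p \<in> sphere w3 \<alpha>" using w3 by (simp add: dist_commute)
    show "q \<in> sphere w3 \<alpha>" using w3 q by (simp add: g_def)
    show "ball w3 \<alpha> \<inter> P = {}"
    proof (rule ccontr)
      assume "ball w3 \<alpha> \<inter> P \<noteq> {}"
      then obtain y where y: "y \<in> P" "dist w3 y < \<alpha>" by auto
      show False
      proof (cases "y = p")
        case True thus False using y w3 by (simp add: dist_commute)
      next
        case False
        hence "y \<in> Q" using y by (simp add: Q_def)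
        thus False using infdist_le[of y Q w3] y w3 by (simp add: g_def)
      qed
    qed
  qed
  thus ?thesis using px by blast
qed



lemma cont_fst_coord:
  "continuous_on S (\<lambda>z::(('a \<Rightarrow> 'b::topological_space) \<times> 'c::topological_space). fst z i)"
  by (rule continuous_on_compose2[OF continuous_on_product_coordinates continuous_on_fst[OF continuous_on_id]]) auto

lemma closed_proj_compact:
  fixes T :: "('a::topological_space \<times> 'b::topological_space) set"
  assumes K: "compact K" and T: "closed T"
  shows "closed {x. \<exists>y\<in>K. (x,y) \<in> T}"
proof -
  have "open (- {x. \<exists>y\<in>K. (x,y) \<in> T})"
  proof (subst open_subopen, intro ballI)
    fix x0 assume "x0 \<in> - {x. \<exists>y\<in>K. (x,y) \<in> T}"
    hence "{x0} \<times> K \<subseteq> - T" by auto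
    then obtain X0 where "x0 \<in> X0" "open X0" "X0 \<times> K \<subseteq> - T"
      using Elementary_Topology.tube_lemma[OF K] T by (metis open_Compl)
    thus "\<exists>U. open U \<and> x0 \<in> U \<and> U \<subseteq> - {x. \<exists>y\<in>K. (x,y) \<in> T}" by blast
  qed
  thus ?thesis by (simp add: closed_open)
qed

definition edge_ij :: "real \<Rightarrow> nat \<Rightarrow> nat \<Rightarrow> nat \<Rightarrow> (nat \<Rightarrow> point) \<Rightarrow> bool" where
  "edge_ij \<alpha> n i j X \<longleftrightarrow> X i \<noteq> X j \<and>
     (\<exists>c. dist c (X i) = \<alpha> \<and> dist c (X j) = \<alpha> \<and> (\<forall>k\<in>{..<n}. \<alpha> \<le> dist c (X k)))"

lemma edge_ij_borel:
  assumes a0: "0 < \<alpha>"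
  shows "{X. edge_ij \<alpha> n i j X} \<in> sets borel"
proof -
  define T0 :: "((nat \<Rightarrow> point) \<times> point) set" where
    "T0 = {z. dist (fst z i + \<alpha> *\<^sub>R snd z) (fst z j) = \<alpha> \<and>
               (\<forall>k\<in>{..<n}. \<alpha> \<le> dist (fst z i + \<alpha> *\<^sub>R snd z) (fst z k))}"
  have cA: "closed {z :: (nat \<Rightarrow> point) \<times> point. dist (fst z i + \<alpha> *\<^sub>R snd z) (fst z j) = \<alpha>}"
    by (rule closed_Collect_eq) (intro continuous_intros cont_fst_coord)+
  have cB: "closed {z :: (nat \<Rightarrow> point) \<times> point. \<alpha> \<le> dist (fst z i + \<alpha> *\<^sub>R snd z) (fst z k)}" for k
    by (rule closed_Collect_le) (intro continuous_intros cont_fst_coord)+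
  have "T0 = {z. dist (fst z i + \<alpha> *\<^sub>R snd z) (fst z j) = \<alpha>} \<inter>
      (\<Inter>k\<in>{..<n}. {z. \<alpha> \<le> dist (fst z i + \<alpha> *\<^sub>R snd z) (fst z k)})"
    unfolding T0_def by auto
  hence "closed T0" using cA cB by (simp add: closed_INT closed_Int)
  hence C: "closed {X. \<exists>e\<in>sphere 0 1. (X, e) \<in> T0}"
    by (intro closed_proj_compact) auto
  have eq: "{X. edge_ij \<alpha> n i j X} = {X. X i \<noteq> X j} \<inter> {X. \<exists>e\<in>sphere 0 1. (X, e) \<in> T0}"
  proof (intro set_eqI iffI)
    fix X assume "X \<in> {X. edge_ij \<alpha> n i j X}"
    then obtain c where c: "X i \<noteq> X j" "dist c (X i) = \<alpha>" "dist c (X j) = \<alpha>"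
        "\<forall>k\<in>{..<n}. \<alpha> \<le> dist c (X k)"
      by (auto simp: edge_ij_def)
    define e where "e = (1/\<alpha>) *\<^sub>R (c - X i)"
    have ce: "X i + \<alpha> *\<^sub>R e = c" using a0 by (simp add: e_def)
    have "e \<in> sphere 0 1" using a0 c(2) by (simp add: e_def dist_norm norm_minus_commute)
    moreover have "(X, e) \<in> T0" unfolding T0_def using c(3,4) by (simp add: ce)
    ultimately show "X \<in> {X. X i \<noteq> X j} \<inter> {X. \<exists>e\<in>sphere 0 1. (X, e) \<in> T0}"
      using c(1) by blast
  next
    fix X assume "X \<in> {X. X i \<noteq> X j} \<inter> {X. \<exists>e\<in>sphere 0 1. (X, e) \<in> T0}"
    then obtain e where e: "X i \<noteq> X j" "norm e = 1" "(X, e) \<in> T0" by auto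
    have "dist (X i + \<alpha> *\<^sub>R e) (X i) = \<alpha>" using e a0 by (simp add: dist_norm)
    thus "X \<in> {X. edge_ij \<alpha> n i j X}" using e
      unfolding edge_ij_def T0_def by (auto intro!: exI[of _ "X i + \<alpha> *\<^sub>R e"])
  qed
  have O: "open {X :: nat \<Rightarrow> point. X i \<noteq> X j}"
    by (intro open_Collect_neq continuous_on_product_coordinates)
  show ?thesis unfolding eq using C O by (intro sets.Int borel_open borel_closed) 
qed

lemma Phi_borel:
  fixes F :: "point set" and Kf :: "point \<Rightarrow> point set"
  assumes a0: "0 < \<alpha>"
  shows "{X :: nat \<Rightarrow> point. \<forall>x\<in>F. \<exists>p q. alpha_edge \<alpha> (X ` {..<n}) p q \<and>
             (infdist p (Kf x) \<le> \<alpha> \<or> infdist q (Kf x) \<le> \<alpha>)} \<in> sets borel"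
proof -
  define Pairs where "Pairs = {..<n} \<times> {..<n}"
  define N where "N x p \<longleftrightarrow> infdist p (Kf x) \<le> \<alpha>" for x p
  have ae: "alpha_edge \<alpha> (X ` {..<n}) p q \<longleftrightarrow>
      (\<exists>i<n. \<exists>j<n. p = X i \<and> q = X j \<and> edge_ij \<alpha> n i j X)" for X p q
  proof
    assume "alpha_edge \<alpha> (X ` {..<n}) p q"
    then obtain i j c where ij: "i < n" "j < n" "p = X i" "q = X j" "p \<noteq> q"
      "dist c p = \<alpha>" "dist c q = \<alpha>" "ball c \<alpha> \<inter> X ` {..<n} = {}"
      unfolding alpha_edge_def by auto
    have "\<forall>k\<in>{..<n}. \<alpha> \<le> dist c (X k)"
    proof
      fix k assume "k \<in> {..<n}"
      hence "X k \<notin> ball c \<alpha>" using ij(8) by blast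
      thus "\<alpha> \<le> dist c (X k)" by simp
    qed
    thus "\<exists>i<n. \<exists>j<n. p = X i \<and> q = X j \<and> edge_ij \<alpha> n i j X"
      using ij unfolding edge_ij_def by blast
  next
    assume "\<exists>i<n. \<exists>j<n. p = X i \<and> q = X j \<and> edge_ij \<alpha> n i j X"
    then obtain i j c where ij: "i < n" "j < n" "p = X i" "q = X j" "p \<noteq> q"
      "dist c p = \<alpha>" "dist c q = \<alpha>" "\<forall>k\<in>{..<n}. \<alpha> \<le> dist c (X k)"
      unfolding edge_ij_def by blast
    have "ball c \<alpha> \<inter> X ` {..<n} = {}"
    proof (rule ccontr)
      assume "ball c \<alpha> \<inter> X ` {..<n} \<noteq> {}"
      then obtain k where "k < n" "dist c (X k) < \<alpha>" by auto
      thus False using ij(8) by force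
    qed
    thus "alpha_edge \<alpha> (X ` {..<n}) p q"
      unfolding alpha_edge_def using ij by auto
  qed
  define Z where "Z T = {X :: nat \<Rightarrow> point. \<forall>x\<in>F. \<exists>ij\<in>T. N x (X (fst ij)) \<or> N x (X (snd ij))}" for T
  define Ed where "Ed T = (\<Inter>ij\<in>Pairs. {X. edge_ij \<alpha> n (fst ij) (snd ij) X \<longleftrightarrow> ij \<in> T})" for T
  have eq: "{X :: nat \<Rightarrow> point. \<forall>x\<in>F. \<exists>p q. alpha_edge \<alpha> (X ` {..<n}) p q \<and>
             (infdist p (Kf x) \<le> \<alpha> \<or> infdist q (Kf x) \<le> \<alpha>)} = (\<Union>T\<in>Pow Pairs. Ed T \<inter> Z T)"
  proof (intro set_eqI iffI)
    fix X assume X: "X \<in> {X :: nat \<Rightarrow> point. \<forall>x\<in>F. \<exists>p q. alpha_edge \<alpha> (X ` {..<n}) p q \<and>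
             (infdist p (Kf x) \<le> \<alpha> \<or> infdist q (Kf x) \<le> \<alpha>)}"
    define T where "T = {ij\<in>Pairs. edge_ij \<alpha> n (fst ij) (snd ij) X}"
    have "X \<in> Ed T" unfolding Ed_def T_def by auto
    moreover have "X \<in> Z T" unfolding Z_def
    proof (intro CollectI ballI)
      fix x assume "x \<in> F"
      then obtain p q where pq: "alpha_edge \<alpha> (X ` {..<n}) p q" "N x p \<or> N x q"
        using X unfolding N_def by blast
      then obtain i j where "i < n" "j < n" "p = X i" "q = X j" "edge_ij \<alpha> n i j X"
        using ae by blast
      thus "\<exists>ij\<in>T. N x (X (fst ij)) \<or> N x (X (snd ij))"
        using pq(2) by (intro bexI[of _ "(i,j)"]) (auto simp: T_def Pairs_def)
    qed
    moreover have "T \<in> Pow Pairs" by (auto simp: T_def)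
    ultimately show "X \<in> (\<Union>T\<in>Pow Pairs. Ed T \<inter> Z T)" by blast
  next
    fix X assume "X \<in> (\<Union>T\<in>Pow Pairs. Ed T \<inter> Z T)"
    then obtain T where T: "T \<subseteq> Pairs" "X \<in> Ed T" "X \<in> Z T" by auto
    show "X \<in> {X :: nat \<Rightarrow> point. \<forall>x\<in>F. \<exists>p q. alpha_edge \<alpha> (X ` {..<n}) p q \<and>
             (infdist p (Kf x) \<le> \<alpha> \<or> infdist q (Kf x) \<le> \<alpha>)}"
    proof (intro CollectI ballI)
      fix x assume "x \<in> F"
      then obtain ij where ij: "ij \<in> T" "N x (X (fst ij)) \<or> N x (X (snd ij))"
        using T(3) unfolding Z_def by blast
      have "ij \<in> Pairs" using ij T by auto
      hence "edge_ij \<alpha> n (fst ij) (snd ij) X" using T(2) ij(1) unfolding Ed_def by blast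
      hence "alpha_edge \<alpha> (X ` {..<n}) (X (fst ij)) (X (snd ij))"
        unfolding ae using \<open>ij \<in> Pairs\<close> by (auto simp: Pairs_def) blast
      thus "\<exists>p q. alpha_edge \<alpha> (X ` {..<n}) p q \<and>
             (infdist p (Kf x) \<le> \<alpha> \<or> infdist q (Kf x) \<le> \<alpha>)"
        using ij(2) unfolding N_def by blast
    qed
  qed
  have fin: "finite Pairs" by (simp add: Pairs_def)
  have closedN: "closed {X :: nat \<Rightarrow> point. N x (X k)}" for x k
  proof -
    have "continuous_on UNIV (\<lambda>X::nat\<Rightarrow>point. infdist (X k) (Kf x))"
      by (rule continuous_on_compose2[where g="\<lambda>p. infdist p (Kf x)", OF continuous_on_infdist[OF continuous_on_id] continuous_on_product_coordinates]) auto
    thus ?thesis unfolding N_def by (intro closed_Collect_le continuous_on_const)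
  qed
  have "closed (Z T)" if "finite T" for T
  proof -
    have "Z T = (\<Inter>x\<in>F. \<Union>ij\<in>T. {X. N x (X (fst ij))} \<union> {X. N x (X (snd ij))})"
      unfolding Z_def by auto
    thus ?thesis using that closedN by (auto intro!: closed_INT closed_UN closed_Un)
  qed
  hence ZB: "Z T \<in> sets borel" if "T \<subseteq> Pairs" for T
    using that fin by (meson borel_closed finite_subset)
  have EB: "Ed T \<in> sets borel" for T
    unfolding Ed_def
  proof (rule sets.countable_INT'')
    show "UNIV \<in> sets borel" by simp
    show "countable Pairs" using fin by (simp add: countable_finite)
    fix ij
    show "{X. edge_ij \<alpha> n (fst ij) (snd ij) X = (ij \<in> T)} \<in> sets borel"
    proof (cases "ij \<in> T")
      case True thus ?thesis using edge_ij_borel[OF a0] by simp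
    next
      case False
      hence "{X. edge_ij \<alpha> n (fst ij) (snd ij) X = (ij \<in> T)} = UNIV - {X. edge_ij \<alpha> n (fst ij) (snd ij) X}" by auto
      thus ?thesis using edge_ij_borel[OF a0] by (metis sets.compl_sets space_borel)
    qed
  qed
  show ?thesis unfolding eq using fin EB ZB by (intro sets.finite_UN) auto
qed

lemma coord_meas:
  "(\<lambda>X. X i) \<in> borel_measurable (sample_space S n)"
proof (cases "i < n")
  case True
  have "(\<lambda>X. X i) \<in> measurable (sample_space S n) (uniform_measure lborel S)"
    unfolding sample_space_def using True by (intro measurable_component_singleton) auto
  moreover have "measurable (sample_space S n) (uniform_measure lborel S) = borel_measurable (sample_space S n)"
    by (rule measurable_cong_sets) auto
  ultimately show ?thesis by simp
next
  case False
  have "(\<lambda>X. undefined) \<in> borel_measurable (sample_space S n)" by simp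
  moreover have "X i = undefined" if "X \<in> space (sample_space S n)" for X
    using that False by (auto simp: sample_space_def space_PiM PiE_def extensional_def)
  ultimately show ?thesis using measurable_cong[of "sample_space S n" "\<lambda>X. X i" "\<lambda>X. undefined" borel] by simp
qed

lemma E_sets:
  fixes F :: "point set" and Kf :: "point \<Rightarrow> point set"
  assumes a0: "0 < \<alpha>"
  shows "{X \<in> space (sample_space S n). \<forall>x\<in>F. \<exists>p q. alpha_edge \<alpha> (X ` {..<n}) p q \<and>
             (infdist p (Kf x) \<le> \<alpha> \<or> infdist q (Kf x) \<le> \<alpha>)} \<in> sets (sample_space S n)"
proof -
  have "(\<lambda>X. X) \<in> borel_measurable (sample_space S n)"
    by (rule measurable_coordinatewise_then_product) (rule coord_meas)
  from measurable_sets[OF this Phi_borel[OF a0, of F n Kf]] show ?thesis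
    by (simp add: Collect_conj_eq Int_commute)
qed




lemma good_bound:
  fixes S G :: "point set" and e q :: real and n :: nat
  assumes Sb: "S \<in> sets lborel" and S0: "0 < measure lborel S" and Sf: "emeasure lborel S < \<infinity>"
   and Gfin: "finite G" and Gsub: "\<forall>g\<in>G. ball g e \<subseteq> S"
   and q: "\<forall>g\<in>G. q \<le> measure lborel (ball g e) / measure lborel S"
  shows "1 - card G * (1 - q)^n \<le> measure (sample_space S n)
           (PiE {..<n} (\<lambda>_. S) - (\<Union>g\<in>G. PiE {..<n} (\<lambda>_. S - ball g e)))"
proof -
  define U where "U = uniform_measure lborel S"
  have eS: "emeasure lborel S = ennreal (measure lborel S)"
    using Sf by (simp add: emeasure_eq_ennreal_measure)
  have eS0: "emeasure lborel S \<noteq> 0" "emeasure lborel S \<noteq> \<infinity>" using eS S0 by auto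
  interpret U: prob_space U unfolding U_def by (rule prob_space_uniform_measure[OF eS0])
  interpret P: finite_product_prob_space "\<lambda>_. U" "{..<n}"
    by unfold_locales simp
  have setsU: "sets U = sets lborel" by (simp add: U_def)
  have MU: "measure U B = measure lborel (S \<inter> B) / measure lborel S" if "B \<in> sets lborel" for B
    unfolding U_def using eS0 that by simp
  have M: "sample_space S n = PiM {..<n} (\<lambda>_. U)" by (simp add: sample_space_def U_def)
  have SU: "S \<in> sets U" using Sb setsU by simp
  have BU: "S - ball g e \<in> sets U" for g using Sb setsU by auto
  have m1: "measure (PiM {..<n} (\<lambda>_. U)) (PiE {..<n} (\<lambda>_. S)) = 1"
    using P.prob_times[of "\<lambda>_. S"] SU MU[OF Sb] S0 by simp
  have m2: "measure (PiM {..<n} (\<lambda>_. U)) (PiE {..<n} (\<lambda>_. S - ball g e)) \<le> (1 - q)^n" if g: "g \<in> G" for g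
  proof -
    have bS: "ball g e \<subseteq> S" using Gsub g by auto
    have "measure U (S - ball g e) = measure lborel (S - ball g e) / measure lborel S"
      using MU[of "S - ball g e"] Sb by (simp add: Int_absorb1 Diff_subset)
    also have "\<dots> = (measure lborel S - measure lborel (ball g e)) / measure lborel S"
      using measure_Diff[of lborel S "ball g e"] eS0 Sb bS by simp
    also have "\<dots> = 1 - measure lborel (ball g e) / measure lborel S" using S0 by (simp add: field_simps)
    also have "\<dots> \<le> 1 - q" using q g by simp
    finally have le: "measure U (S - ball g e) \<le> 1 - q" .
    have "measure (PiM {..<n} (\<lambda>_. U)) (PiE {..<n} (\<lambda>_. S - ball g e)) = measure U (S - ball g e) ^ n"
      using P.prob_times[of "\<lambda>_. S - ball g e"] BU by simp
    also have "\<dots> \<le> (1 - q)^n" by (intro power_mono le measure_nonneg)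
    finally show ?thesis .
  qed
  let ?A = "PiE {..<n} (\<lambda>_. S)" and ?B = "\<Union>g\<in>G. PiE {..<n} (\<lambda>_. S - ball g e)"
  have AS: "?A \<in> sets (PiM {..<n} (\<lambda>_. U))" using SU by (intro sets_PiM_I_finite) auto
  have BS: "PiE {..<n} (\<lambda>_. S - ball g e) \<in> sets (PiM {..<n} (\<lambda>_. U))" for g
    using BU by (intro sets_PiM_I_finite) auto
  have "measure (PiM {..<n} (\<lambda>_. U)) ?B \<le> (\<Sum>g\<in>G. measure (PiM {..<n} (\<lambda>_. U)) (PiE {..<n} (\<lambda>_. S - ball g e)))"
    using Gfin BS by (intro measure_UNION_le) auto
  also have "\<dots> \<le> (\<Sum>g\<in>G. (1 - q)^n)" using m2 by (intro sum_mono) auto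
  also have "\<dots> = card G * (1 - q)^n" by simp
  finally have mB: "measure (PiM {..<n} (\<lambda>_. U)) ?B \<le> card G * (1 - q)^n" .
  have BS': "?B \<in> sets (PiM {..<n} (\<lambda>_. U))" using Gfin BS by auto
  have "measure (PiM {..<n} (\<lambda>_. U)) ?A \<le> measure (PiM {..<n} (\<lambda>_. U)) (?A - ?B) + measure (PiM {..<n} (\<lambda>_. U)) ?B"
  proof -
    have "measure (PiM {..<n} (\<lambda>_. U)) ?A \<le> measure (PiM {..<n} (\<lambda>_. U)) ((?A - ?B) \<union> ?B)"
      using AS BS' by (intro P.finite_measure_mono) auto
    also have "\<dots> \<le> measure (PiM {..<n} (\<lambda>_. U)) (?A - ?B) + measure (PiM {..<n} (\<lambda>_. U)) ?B"
      using AS BS' by (intro measure_Un_le) auto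
    finally show ?thesis .
  qed
  thus ?thesis using m1 mB M by simp
qed




lemma opp_center:
  fixes c c' x :: point
  assumes r0: "0 < r" and disj: "ball c r \<inter> ball c' r = {}"
    and xc: "dist c x = r" and xc': "dist c' x = r"
  shows "c' - x = - (c - x)"
proof -
  have "2 * r \<le> dist c c'"
  proof (rule ccontr)
    assume "\<not> ?thesis"
    hence lt: "dist c c' < 2 * r" by simp
    define mid where "mid = c + (1/2) *\<^sub>R (c' - c)"
    have h: "(1/2::real) = 1 - 1/2" by simp
    have e0: "(1/2) *\<^sub>R (c' - c) = (c' - c) - (1/2) *\<^sub>R (c' - c)"
      by (subst (1) h) (simp only: scaleR_left_diff_distrib scaleR_one)
    have e1: "c - mid = (1/2) *\<^sub>R (c - c')" "c' - mid = (1/2) *\<^sub>R (c' - c)"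
      by (simp add: mid_def scaleR_diff_right) (metis e0 diff_diff_eq mid_def)
    have "dist c mid = dist c c' / 2" "dist c' mid = dist c c' / 2"
      unfolding dist_norm e1 by (simp_all add: norm_minus_commute)
    hence "mid \<in> ball c r \<inter> ball c' r" using lt by simp
    thus False using disj by blast
  qed
  define a where "a = c - x"
  define b where "b = c' - x"
  have na: "a \<bullet> a = r^2" using xc unfolding a_def dist_norm by (metis power2_norm_eq_inner)
  have nb: "b \<bullet> b = r^2" using xc' unfolding b_def dist_norm by (metis power2_norm_eq_inner)
  have "dist c c' = norm (a - b)" by (simp add: a_def b_def dist_norm)
  hence "(2*r)^2 \<le> (a - b) \<bullet> (a - b)" using \<open>2 * r \<le> dist c c'\<close> r0
    by (metis power2_norm_eq_inner power_mono zero_le_mult_iff zero_le_numeral less_imp_le)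
  hence "(a \<bullet> b) \<le> -(r^2)" using na nb
    by (simp add: inner_diff_left inner_diff_right inner_commute power2_eq_square)
  hence "(a + b) \<bullet> (a + b) \<le> 0" using na nb
    by (simp add: inner_add_left inner_add_right inner_commute)
  hence "a + b = 0" by (meson inner_ge_zero inner_eq_zero_iff order_antisym)
  hence "b = - a" by (metis add.commute eq_neg_iff_add_eq_0)
  thus ?thesis by (simp only: a_def b_def)
qed

lemma ball_vol:
  assumes "0 \<le> \<rho>"
  shows "measure lborel (ball (c::point) \<rho>) = \<rho>^2 * measure lborel (ball (0::point) 1)"
  using content_ball_conv_unit_ball[OF assms, of c] by simp

lemma packing:
  fixes S :: "point set" and e :: real
  assumes e0: "0 < e" and Sf: "S \<in> fmeasurable lborel"
  defines "Y \<equiv> {y. ball y (3*e) \<subseteq> S}"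
  obtains G where "finite G" "G \<subseteq> Y" "\<forall>y\<in>Y. \<exists>g\<in>G. dist g y < 2*e"
    "real (card G) * (e^2 * measure lborel (ball (0::point) 1)) \<le> measure lborel S"
proof -
  define V where "V = measure lborel (ball (0::point) 1)"
  have V0: "0 < V" unfolding V_def by (rule content_ball_pos) simp
  define Fam where "Fam = {F. finite F \<and> F \<subseteq> Y \<and> (\<forall>g\<in>F. \<forall>g'\<in>F. g \<noteq> g' \<longrightarrow> 2*e \<le> dist g g')}"
  have bnd: "real (card F) * (e^2 * V) \<le> measure lborel S" if "F \<in> Fam" for F
  proof -
    have F: "finite F" "F \<subseteq> Y" "\<forall>g\<in>F. \<forall>g'\<in>F. g \<noteq> g' \<longrightarrow> 2*e \<le> dist g g'"
      using that by (auto simp: Fam_def)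
    have bf: "ball g e \<in> fmeasurable lborel" for g :: point
      using emeasure_lborel_ball_finite[of g e] by (auto simp: fmeasurable_def)
    have pw: "pairwise (\<lambda>i j. disjnt (ball i e) (ball j e)) F"
    proof (rule pairwiseI)
      fix g g' assume "g \<in> F" "g' \<in> F" "g \<noteq> g'"
      hence d: "2*e \<le> dist g g'" using F by auto
      have "ball g e \<inter> ball g' e = {}"
      proof (rule ccontr)
        assume "ball g e \<inter> ball g' e \<noteq> {}"
        then obtain z where "z \<in> ball g e" "z \<in> ball g' e" by blast
        hence "dist g g' < 2*e" using dist_triangle[of g g' z] by (simp add: dist_commute)
        thus False using d by simp
      qed
      thus "disjnt (ball g e) (ball g' e)" by (simp add: disjnt_def)
    qed
    have "measure lborel (\<Union>g\<in>F. ball g e) = (\<Sum>g\<in>F. measure lborel (ball g e))"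
      using F(1) bf pw by (intro measure_UNION') auto
    also have "\<dots> = real (card F) * (e^2 * V)" using ball_vol[of e] e0 by (simp add: V_def)
    finally have eq: "measure lborel (\<Union>g\<in>F. ball g e) = real (card F) * (e^2 * V)" .
    have sub: "(\<Union>g\<in>F. ball g e) \<subseteq> S"
    proof
      fix z assume "z \<in> (\<Union>g\<in>F. ball g e)"
      then obtain g where g: "g \<in> F" "z \<in> ball g e" by auto
      have "ball g (3*e) \<subseteq> S" using F(2) g(1) by (auto simp: Y_def)
      moreover have "z \<in> ball g (3*e)" using g e0 by auto
      ultimately show "z \<in> S" by auto
    qed
    have "measure lborel (\<Union>g\<in>F. ball g e) \<le> measure lborel S"
      using sub Sf F(1) by (intro measure_mono_fmeasurable) auto
    thus ?thesis using eq by simp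
  qed
  define N where "N = nat \<lfloor>measure lborel S / (e^2 * V)\<rfloor> + 1"
  have cb: "card F < N" if "F \<in> Fam" for F
  proof -
    have "real (card F) \<le> measure lborel S / (e^2 * V)"
      using bnd[OF that] e0 V0 by (simp add: field_simps)
    hence "real (card F) < real N" unfolding N_def by linarith
    thus ?thesis by linarith
  qed
  have "{} \<in> Fam" by (simp add: Fam_def)
  then obtain G where G: "G \<in> Fam" and Gmax: "\<forall>F. F \<in> Fam \<longrightarrow> card F \<le> card G"
    using ex_has_greatest_nat[of "\<lambda>F. F \<in> Fam" "{}" card N] cb by blast
  have cov: "\<forall>y\<in>Y. \<exists>g\<in>G. dist g y < 2*e"
  proof (rule ccontr)
    assume "\<not> ?thesis"
    then obtain y where y: "y \<in> Y" "\<forall>g\<in>G. 2*e \<le> dist g y" by (auto simp: not_less)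
    have yG: "y \<notin> G" using y(2) e0 by force
    have "insert y G \<in> Fam" using G y by (auto simp: Fam_def dist_commute)
    hence "card (insert y G) \<le> card G" using Gmax by blast
    moreover have "card (insert y G) = Suc (card G)" using G yG by (simp add: Fam_def)
    ultimately show False by simp
  qed
  show ?thesis using that[of G] G cov bnd[OF G] by (auto simp: Fam_def V_def)
qed

theorem proposition4:
  fixes \<alpha> r d :: real
  assumes "0 < \<alpha>" and "\<alpha> < r"
  shows "\<exists>A>0. \<forall>S :: point set. \<forall>n::nat.
     compact S \<and> S \<noteq> {} \<and> rolling S r \<and> rolling (- S) r \<and> diameter S = d \<and> n \<ge> 1 \<longrightarrow>
     measure (sample_space S n)
       {X \<in> space (sample_space S n).
          \<forall>x\<in>frontier S. \<exists>p q. alpha_edge \<alpha> (X ` {..<n}) p q \<and>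
             (infdist p (connected_component_set (frontier S) x) \<le> \<alpha> \<or>
              infdist q (connected_component_set (frontier S) x) \<le> \<alpha>)}
     \<ge> 1 - A * exp (- real n / A)"
proof -
  note a0 = assms(1) and ar = assms(2)
  have r0: "0 < r" using a0 ar by linarith
  define s where "s = \<alpha>^2 / r"
  define m where "m = (\<alpha> - s) / 2"
  define e where "e = m / 6"
  have s0: "0 < s" using a0 r0 by (simp add: s_def)
  have sa: "s < \<alpha>" using a0 ar r0 by (simp add: s_def power2_eq_square field_simps)
  have m0: "0 < m" using sa by (simp add: m_def)
  have mr: "2 * m < r" using sa s0 ar unfolding m_def by (simp add: field_simps)
  have e0: "0 < e" using m0 by (simp add: e_def)
  define A where "A = d^2 / e^2 + 1"
  have A0: "0 < A" unfolding A_def by (simp add: add_nonneg_pos)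
  show ?thesis
  proof (intro exI[of _ A] conjI allI impI A0)
    fix S :: "point set" and n :: nat
    assume H: "compact S \<and> S \<noteq> {} \<and> rolling S r \<and> rolling (- S) r \<and> diameter S = d \<and> n \<ge> 1"
    hence cS: "compact S" and neS: "S \<noteq> {}" and rS: "rolling S r" and rS': "rolling (- S) r"
      and dS: "diameter S = d" by auto
    let ?M = "sample_space S n"
    let ?E = "{X \<in> space ?M.
          \<forall>x\<in>frontier S. \<exists>p q. alpha_edge \<alpha> (X ` {..<n}) p q \<and>
             (infdist p (connected_component_set (frontier S) x) \<le> \<alpha> \<or>
              infdist q (connected_component_set (frontier S) x) \<le> \<alpha>)}"
    define V where "V = measure lborel (ball (0::point) 1)"
    have V0: "0 < V" unfolding V_def by (rule content_ball_pos) simp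
    have bS: "bounded S" using cS by (rule compact_imp_bounded)
    have Sb: "S \<in> sets lborel" using cS by (simp add: borel_compact)
    have Sf: "S \<in> fmeasurable lborel" using cS by (rule fmeasurable_compact)
    have Sfin: "emeasure lborel S < \<infinity>" using emeasure_bounded_finite[OF bS] .
    have "S \<noteq> UNIV" using bS not_bounded_UNIV by auto
    then obtain x0 where x0: "x0 \<in> frontier S" using frontier_not_empty[OF neS] by blast
    obtain c0 where c0: "ball c0 r \<inter> - S = {}" using rS' x0 unfolding rolling_def by auto
    have bc0: "ball c0 r \<subseteq> S" using c0 by auto
    have bf: "ball g \<rho> \<in> fmeasurable lborel" for g :: point and \<rho>
      using emeasure_lborel_ball_finite[of g \<rho>] by (auto simp: fmeasurable_def)
    have "r^2 * V \<le> measure lborel S"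
      using measure_mono_fmeasurable[OF bc0 _ Sf] ball_vol[of r c0] r0 by (simp add: V_def)
    hence volS0: "0 < measure lborel S" using r0 V0 by (smt (verit) mult_pos_pos zero_less_power)
    obtain s1 where s1: "s1 \<in> S" using neS by auto
    have Scb: "S \<subseteq> cball s1 d"
      using diameter_bounded_bound[OF bS s1] dS by (auto simp: dist_commute)
    have d0: "0 \<le> d" using Scb s1 by auto
    have "measure lborel S \<le> measure lborel (cball s1 d)"
      using Scb Sb emeasure_lborel_cball_finite[of s1 d]
      by (intro measure_mono_fmeasurable) (auto simp: fmeasurable_def)
    also have "\<dots> = d^2 * V" using content_cball_conv_ball[of s1 d] ball_vol[OF d0, of s1] by (simp add: V_def)
    finally have volS: "measure lborel S \<le> d^2 * V" .
    have dpos: "0 < d" using volS volS0 V0 d0 by (cases "d = 0") auto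
    define q where "q = e^2 / d^2"
    obtain G where G: "finite G" "G \<subseteq> {y. ball y (3*e) \<subseteq> S}"
      "\<forall>y\<in>{y. ball y (3*e) \<subseteq> S}. \<exists>g\<in>G. dist g y < 2*e"
      "real (card G) * (e^2 * V) \<le> measure lborel S"
      using packing[OF e0 Sf] unfolding V_def by blast
    have Gsub: "\<forall>g\<in>G. ball g e \<subseteq> S"
    proof
      fix g assume "g \<in> G"
      hence "ball g (3*e) \<subseteq> S" using G(2) by auto
      moreover have "ball g e \<subseteq> ball g (3*e)" using e0 by (intro subset_ball) simp
      ultimately show "ball g e \<subseteq> S" by blast
    qed
    have qle: "\<forall>g\<in>G. q \<le> measure lborel (ball g e) / measure lborel S"
    proof
      fix g assume "g \<in> G"
      have "q = (e^2 * V) / (d^2 * V)" using V0 by (simp add: q_def)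
      also have "\<dots> \<le> (e^2 * V) / measure lborel S"
        using volS volS0 V0 e0 by (intro divide_left_mono) auto
      also have "\<dots> = measure lborel (ball g e) / measure lborel S"
        using ball_vol[of e g] e0 by (simp add: V_def)
      finally show "q \<le> measure lborel (ball g e) / measure lborel S" .
    qed
    let ?Good = "PiE {..<n} (\<lambda>_. S) - (\<Union>g\<in>G. PiE {..<n} (\<lambda>_. S - ball g e))"
    have gb: "1 - card G * (1 - q)^n \<le> measure ?M ?Good"
      by (rule good_bound[OF Sb volS0 Sfin G(1) Gsub qle])
    have Esets: "?E \<in> sets ?M" by (rule E_sets[OF a0])
    have GoodE: "?Good \<subseteq> ?E"
    proof
      fix X assume X: "X \<in> ?Good"
      have XS: "\<forall>i<n. X i \<in> S" and Xext: "X \<in> extensional {..<n}" using X by (auto simp: PiE_def)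
      have Xsp: "X \<in> space ?M" using Xext by (simp add: sample_space_def space_PiM PiE_def)
      have hit: "\<exists>i<n. X i \<in> ball g e" if "g \<in> G" for g
      proof (rule ccontr)
        assume "\<not> ?thesis"
        hence "X \<in> PiE {..<n} (\<lambda>_. S - ball g e)" using XS Xext by (auto simp: PiE_def)
        thus False using X that by auto
      qed
      have cover: "\<exists>i<n. dist (X i) y < 3*e" if hy: "ball y (3*e) \<subseteq> S" for y
      proof -
        obtain g where g: "g \<in> G" "dist g y < 2*e" using G(3) hy by auto
        obtain i where i: "i < n" "X i \<in> ball g e" using hit[OF g(1)] by auto
        have "dist (X i) y \<le> dist (X i) g + dist g y" by (rule dist_triangle)
        thus ?thesis using i g by (intro exI[of _ i]) (auto simp: dist_commute)
      qed
      show "X \<in> ?E"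
      proof (intro CollectI conjI Xsp ballI)
        fix x assume x: "x \<in> frontier S"
        obtain c where c: "ball c r \<inter> S = {}" "x \<in> sphere c r" using rS x unfolding rolling_def by auto
        obtain c' where c': "ball c' r \<inter> - S = {}" "x \<in> sphere c' r"
          using rS' x unfolding rolling_def by auto
        have "ball c r \<inter> ball c' r = {}" using c(1) c'(1) by auto
        hence cc: "c' - x = - (c - x)" using opp_center[OF r0] c(2) c'(2) by simp
        define u where "u = (1/r) *\<^sub>R (c - x)"
        have nu: "norm u = 1" using c(2) r0 by (simp add: u_def dist_norm)
        have cu: "c - x = r *\<^sub>R u" using r0 by (simp add: u_def)
        have c'u: "c' = x - r *\<^sub>R u" using cc cu by (simp add: algebra_simps)
        have inS: "ball (x - t *\<^sub>R u) (m/2) \<subseteq> S" if "m/2 \<le> t" "t \<le> r - m/2" for t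
        proof
          fix z assume z: "z \<in> ball (x - t *\<^sub>R u) (m/2)"
          have "dist (x - t *\<^sub>R u) c' = r - t"
            using nu that m0 by (simp add: c'u dist_norm algebra_simps flip: scaleR_diff_left)
          hence "dist z c' < r" using z that dist_triangle[of z c' "x - t *\<^sub>R u"] by (simp add: dist_commute)
          hence "z \<in> ball c' r" by (simp add: dist_commute)
          thus "z \<in> S" using c'(1) by auto
        qed
        have me: "3*e = m/2" by (simp add: e_def)
        obtain i1 where i1: "i1 < n" "dist (X i1) (x - (m/2) *\<^sub>R u) < m/2"
          using cover[of "x - (m/2) *\<^sub>R u"] inS[of "m/2"] mr m0 me by auto
        obtain i2 where i2: "i2 < n" "dist (X i2) (x - (3*m/2) *\<^sub>R u) < m/2"
          using cover[of "x - (3*m/2) *\<^sub>R u"] inS[of "3*m/2"] mr m0 me by auto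
        have far: "\<forall>q\<in>X ` {..<n}. r \<le> dist q c"
        proof
          fix q assume "q \<in> X ` {..<n}"
          hence "q \<in> S" using XS by auto
          hence "q \<notin> ball c r" using c(1) by auto
          thus "r \<le> dist q c" by (simp add: dist_commute)
        qed
        obtain p q where pq: "alpha_edge \<alpha> (X ` {..<n}) p q" "dist p x \<le> \<alpha>"
          using edge_exists[OF a0 ar _ far u_def _ s_def m_def, of "X i1" "X i2"] i1 i2 c(2)
          by (auto simp: dist_commute)
        have "x \<in> connected_component_set (frontier S) x"
          using x by (simp add: connected_component_refl)
        hence "infdist p (connected_component_set (frontier S) x) \<le> \<alpha>"
          using pq(2) by (rule infdist_le2)
        thus "\<exists>p q. alpha_edge \<alpha> (X ` {..<n}) p q \<and>
             (infdist p (connected_component_set (frontier S) x) \<le> \<alpha> \<or>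
              infdist q (connected_component_set (frontier S) x) \<le> \<alpha>)"
          using pq(1) by blast
      qed
    qed
    interpret Mp: prob_space ?M
      unfolding sample_space_def
      by (intro prob_space_PiM prob_space_uniform_measure)
         (use Sfin volS0 in \<open>auto simp: emeasure_eq_measure2[OF Sf]\<close>)
    have "measure ?M ?Good \<le> measure ?M ?E"
      using GoodE Esets by (intro Mp.finite_measure_mono)
    have "V * (real (card G) * e^2) \<le> V * d^2" using G(4) volS by (simp add: algebra_simps)
    hence "real (card G) * e^2 \<le> d^2" using V0 by simp
    hence cardG: "real (card G) \<le> d^2 / e^2" using e0 by (simp add: field_simps)
    have q1: "q < 1"
    proof -
      have "e < r" using e0 m0 mr unfolding e_def by linarith
      hence "e^2 < r^2" using e0 by (simp add: power_strict_mono)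
      moreover have "r^2 * V \<le> d^2 * V" using \<open>r^2 * V \<le> measure lborel S\<close> volS by linarith
      hence "r^2 \<le> d^2" using V0 by simp
      ultimately show ?thesis using dpos by (simp add: q_def)
    qed
    have q0: "0 \<le> q" by (simp add: q_def)
    have "1 - q \<le> exp (-q)" using exp_ge_add_one_self[of "-q"] by simp
    hence "(1 - q)^n \<le> exp (- q)^n" using q1 by (intro power_mono) auto
    also have "\<dots> = exp (- (q * real n))" by (simp add: exp_of_nat_mult[symmetric] mult.commute)
    also have "\<dots> \<le> exp (- real n / A)"
    proof -
      have "1 / A = e^2 / (d^2 + e^2)" unfolding A_def using e0 by (simp add: field_simps)
      also have "\<dots> \<le> e^2 / d^2" using dpos e0 by (intro divide_left_mono) (auto intro!: mult_pos_pos add_pos_pos)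
      finally have "1 / A \<le> q" by (simp add: q_def)
      hence "real n * (1 / A) \<le> real n * q" by (intro mult_left_mono) auto
      hence "real n / A \<le> q * real n" by (simp add: mult.commute)
      thus ?thesis by simp
    qed
    finally have ex: "(1 - q)^n \<le> exp (- real n / A)" .
    have "card G * (1 - q)^n \<le> A * exp (- real n / A)"
      using cardG ex q1 by (intro mult_mono) (auto simp: A_def)
    thus "1 - A * exp (- real n / A) \<le> measure ?M ?E"
      using gb \<open>measure ?M ?Good \<le> measure ?M ?E\<close> by linarith
  qed
qed


end
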